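(* Consider a discounted Markov decision problem with discount factor $\gamma\in(0,1)$ and the policy mirror descent method as described in the context, with $\pi^{(0)}\in\operatorname{rint}\Pi$. Let $\rho\in\Delta(\mathcal{S})$ and $\vartheta_\rho=\frac1{1-\gamma}\bigl\|d_\rho(\pi^\star)/\rho\bigr\|_\infty$. Suppose the step sizes satisfy $\eta_0>0$ and \[ \eta_{k+1}\ge\frac{\vartheta_\rho}{\vartheta_\rho-1}\eta_k,\qquad k=0,1,2,\dots \] Then for each $k\ge0$, \[ V_\rho(\pi^{(k)})-V_\rho^\star\le\Bigl(1-\frac1{\vartheta_\rho}\Bigr)^k\Bigl(V_\rho(\pi^{(0)})-V_\rho^\star+\frac{D^\star_0}{\eta_0\gamma}\Bigr). \]
   Context: A discounted Markov decision problem (cost-minimization form): finite state set $\mathcal{S}$, finite action set $\mathcal{A}$, transition probabilities $P(s'|s,a)$, cost $R:\mathcal{S}\times\mathcal{A}\to[0,1]$, discount $\gamma$. Policies $\Pi=\Delta(\mathcal{A})^{|\mathcal{S}|}$; $\operatorname{rint}\Pi$ is the set of policies with all entries $\pi_{s,a}>0$. $V_s(\pi)=\mathbf{E}\bigl[\sum_{t\ge0}\gamma^tR(s_t,a_t)\mid s_0=s\bigr]$ with $a_t\sim\pi_{s_t}$, $s_{t+1}\sim P(\cdot|s_t,a_t)$; $V_\rho(\pi)=\sum_s\rho_sV_s(\pi)$; $V^\star_\rho=\min_{\pi\in\Pi}V_\rho(\pi)$; $\pi^\star$ denotes a policy minimizing $V_s$ simultaneously for all $s$. $Q_{s,a}(\pi)=R_{s,a}+\gamma\sum_{s'}P(s'|s,a)V_{s'}(\pi)$,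 $Q_s(\pi)\in\mathbf{R}^{|\mathcal{A}|}$. Discounted state visitation: $d_{s,s'}(\pi)=(1-\gamma)\sum_{t\ge0}\gamma^t\Pr^\pi(s_t=s'\mid s_0=s)$, $d_{\rho,s'}(\pi)=\sum_s\rho_sd_{s,s'}(\pi)$. For $p,q\in\Delta(\mathcal{S})$, $\|p/q\|_\infty=\max_sp_s/q_s$ with $0/0=1$. Bregman divergence: $h:\mathbf{R}^{|\mathcal{A}|}\to\mathbf{R}\cup\{+\infty\}$ is a convex function of Legendre type (proper, closed, essentially smooth, strictly convex on the relative interior of its domain) with $\Delta(\mathcal{A})\subseteq\operatorname{dom}h$ and $\operatorname{rint}\Delta(\mathcal{A})\subseteq\operatorname{rint}\operatorname{dom}h$; $D(p,p')=h(p)-h(p')-\langle\nabla h(p'),p-p'\rangle$. Policy mirror descent: for each $s\in\mathcal{S}$, $\pi^{(k+1)}_s=\arg\min_{p\in\Delta(\mathcal{A})}\{\eta_k\langle Q_s(\pi^{(k)}),p\rangle+D(p,\pi^{(k)}_s)\}$. Notation: $D^\star_k=\sum_{s}d_{\rho,s}(\pi^\star)D(\pi^\star_s,\pi^{(k)}_s)$. *)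

theory Defs
  imports "HOL-Analysis.Analysis"
begin

definition actdist :: "(real^'a::finite) set" where
  "actdist = {p. (\<forall>a. 0 \<le> p $ a) \<and> (\<Sum>a\<in>UNIV. p $ a) = 1}"

definition rint_actdist :: "(real^'a::finite) set" where
  "rint_actdist = {p. (\<forall>a. 0 < p $ a) \<and> (\<Sum>a\<in>UNIV. p $ a) = 1}"

definition policies :: "('s::finite \<Rightarrow> real^'a::finite) set" where
  "policies = {\<pi>. \<forall>s. \<pi> s \<in> actdist}"

definition rint_policies :: "('s::finite \<Rightarrow> real^'a::finite) set" where
  "rint_policies = {\<pi>. \<forall>s. \<pi> s \<in> rint_actdist}"

definition is_mdp :: "('s::finite \<Rightarrow> 'a::finite \<Rightarrow> 's \<Rightarrow> real) \<Rightarrow> ('s \<Rightarrow> 'a \<Rightarrow> real) \<Rightarrow> real \<Rightarrow> bool" where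
  "is_mdp P R \<gamma> \<longleftrightarrow>
     (\<forall>s a s'. 0 \<le> P s a s') \<and> (\<forall>s a. (\<Sum>s'\<in>UNIV. P s a s') = 1) \<and>
     (\<forall>s a. 0 \<le> R s a \<and> R s a \<le> 1) \<and> 0 < \<gamma> \<and> \<gamma> < 1"

definition Ppol :: "('s::finite \<Rightarrow> 'a::finite \<Rightarrow> 's \<Rightarrow> real) \<Rightarrow> ('s \<Rightarrow> real^'a) \<Rightarrow> 's \<Rightarrow> 's \<Rightarrow> real" where
  "Ppol P \<pi> s s' = (\<Sum>a\<in>UNIV. \<pi> s $ a * P s a s')"

definition Rpol :: "('s::finite \<Rightarrow> 'a::finite \<Rightarrow> real) \<Rightarrow> ('s \<Rightarrow> real^'a) \<Rightarrow> 's \<Rightarrow> real" where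
  "Rpol R \<pi> s = (\<Sum>a\<in>UNIV. \<pi> s $ a * R s a)"

fun Pstep :: "('s::finite \<Rightarrow> 'a::finite \<Rightarrow> 's \<Rightarrow> real) \<Rightarrow> ('s \<Rightarrow> real^'a) \<Rightarrow> nat \<Rightarrow> 's \<Rightarrow> 's \<Rightarrow> real" where
  "Pstep P \<pi> 0 s s' = (if s = s' then 1 else 0)"
| "Pstep P \<pi> (Suc t) s s'' = (\<Sum>s'\<in>UNIV. Pstep P \<pi> t s s' * Ppol P \<pi> s' s'')"

definition Vs :: "('s::finite \<Rightarrow> 'a::finite \<Rightarrow> 's \<Rightarrow> real) \<Rightarrow> ('s \<Rightarrow> 'a \<Rightarrow> real) \<Rightarrow> real \<Rightarrow> ('s \<Rightarrow> real^'a) \<Rightarrow> 's \<Rightarrow> real" where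
  "Vs P R \<gamma> \<pi> s = (\<Sum>t. \<gamma> ^ t * (\<Sum>s'\<in>UNIV. Pstep P \<pi> t s s' * Rpol R \<pi> s'))"

definition Vrho :: "('s::finite \<Rightarrow> 'a::finite \<Rightarrow> 's \<Rightarrow> real) \<Rightarrow> ('s \<Rightarrow> 'a \<Rightarrow> real) \<Rightarrow> real \<Rightarrow> ('s \<Rightarrow> real) \<Rightarrow> ('s \<Rightarrow> real^'a) \<Rightarrow> real" where
  "Vrho P R \<gamma> \<rho> \<pi> = (\<Sum>s\<in>UNIV. \<rho> s * Vs P R \<gamma> \<pi> s)"

definition Vstar :: "('s::finite \<Rightarrow> 'a::finite \<Rightarrow> 's \<Rightarrow> real) \<Rightarrow> ('s \<Rightarrow> 'a \<Rightarrow> real) \<Rightarrow> real \<Rightarrow> ('s \<Rightarrow> real) \<Rightarrow> real" where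
  "Vstar P R \<gamma> \<rho> = (INF \<pi>\<in>policies. Vrho P R \<gamma> \<rho> \<pi>)"

definition Qsa :: "('s::finite \<Rightarrow> 'a::finite \<Rightarrow> 's \<Rightarrow> real) \<Rightarrow> ('s \<Rightarrow> 'a \<Rightarrow> real) \<Rightarrow> real \<Rightarrow> ('s \<Rightarrow> real^'a) \<Rightarrow> 's \<Rightarrow> real^'a" where
  "Qsa P R \<gamma> \<pi> s = (\<chi> a. R s a + \<gamma> * (\<Sum>s'\<in>UNIV. P s a s' * Vs P R \<gamma> \<pi> s'))"

definition dvis :: "('s::finite \<Rightarrow> 'a::finite \<Rightarrow> 's \<Rightarrow> real) \<Rightarrow> real \<Rightarrow> ('s \<Rightarrow> real^'a) \<Rightarrow> 's \<Rightarrow> 's \<Rightarrow> real" where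
  "dvis P \<gamma> \<pi> s s' = (1 - \<gamma>) * (\<Sum>t. \<gamma> ^ t * Pstep P \<pi> t s s')"

definition drho :: "('s::finite \<Rightarrow> 'a::finite \<Rightarrow> 's \<Rightarrow> real) \<Rightarrow> real \<Rightarrow> ('s \<Rightarrow> real) \<Rightarrow> ('s \<Rightarrow> real^'a) \<Rightarrow> 's \<Rightarrow> real" where
  "drho P \<gamma> \<rho> \<pi> s' = (\<Sum>s\<in>UNIV. \<rho> s * dvis P \<gamma> \<pi> s s')"

text \<open>||p/q||_inf = max_s p_s/q_s with 0/0 = 1 (and c/0 = +infinity for c > 0).\<close>
definition ratio_inf :: "('s::finite \<Rightarrow> real) \<Rightarrow> ('s \<Rightarrow> real) \<Rightarrow> ereal" where
  "ratio_inf p q = Max ((\<lambda>s. if q s = 0 then (if p s = 0 then 1 else \<infinity>) else ereal (p s / q s)) ` UNIV)"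

definition strictly_convex_on :: "'v::real_vector set \<Rightarrow> ('v \<Rightarrow> real) \<Rightarrow> bool" where
  "strictly_convex_on S f \<longleftrightarrow> (\<forall>x\<in>S. \<forall>y\<in>S. x \<noteq> y \<longrightarrow>
      (\<forall>u::real. 0 < u \<and> u < 1 \<longrightarrow> f (u *\<^sub>R x + (1 - u) *\<^sub>R y) < u * f x + (1 - u) * f y))"

text \<open>The extended-value convex function h equals the real function h on its effective
domain C and +infinity outside C.  Legendre type (Rockafellar, Sec. 26):
proper (C nonempty), closed (closed epigraph), convex, essentially smooth
(interior C nonempty, h differentiable on interior C, gradient norm blows up at
boundary points), strictly convex on rint C.\<close>
definition legendre :: "(real^'a::finite) set \<Rightarrow> (real^'a \<Rightarrow> real) \<Rightarrow> bool" where
  "legendre C h \<longleftrightarrow>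
     C \<noteq> {} \<and> convex C \<and> convex_on C h \<and>
     closed {(x, t::real). x \<in> C \<and> h x \<le> t} \<and>
     interior C \<noteq> {} \<and>
     (\<forall>x\<in>interior C. h differentiable (at x)) \<and>
     (\<forall>xs y. (\<forall>n. xs n \<in> interior C) \<longrightarrow> xs \<longlonglongrightarrow> y \<longrightarrow> y \<in> frontier (interior C) \<longrightarrow>
        filterlim (\<lambda>n. onorm (frechet_derivative h (at (xs n)))) at_top sequentially) \<and>
     strictly_convex_on (rel_interior C) h"

definition bregman :: "(real^'a::finite \<Rightarrow> real) \<Rightarrow> real^'a \<Rightarrow> real^'a \<Rightarrow> real" where
  "bregman h p p' = h p - h p' - frechet_derivative h (at p') (p - p')"

definition Dstar :: "('s::finite \<Rightarrow> 'a::finite \<Rightarrow> 's \<Rightarrow> real) \<Rightarrow> real \<Rightarrow> ('s \<Rightarrow> real) \<Rightarrow> (real^'a \<Rightarrow> real)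
    \<Rightarrow> ('s \<Rightarrow> real^'a) \<Rightarrow> ('s \<Rightarrow> real^'a) \<Rightarrow> real" where
  "Dstar P \<gamma> \<rho> h \<pi>s \<pi> = (\<Sum>s\<in>UNIV. drho P \<gamma> \<rho> \<pi>s s * bregman h (\<pi>s s) (\<pi> s))"

definition pmd_step :: "('s::finite \<Rightarrow> 'a::finite \<Rightarrow> 's \<Rightarrow> real) \<Rightarrow> ('s \<Rightarrow> 'a \<Rightarrow> real) \<Rightarrow> real \<Rightarrow> (real^'a \<Rightarrow> real)
    \<Rightarrow> real \<Rightarrow> ('s \<Rightarrow> real^'a) \<Rightarrow> ('s \<Rightarrow> real^'a) \<Rightarrow> bool" where
  "pmd_step P R \<gamma> h \<eta> \<pi> \<pi>' \<longleftrightarrow> (\<forall>s. is_arg_min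
      (\<lambda>p. \<eta> * (Qsa P R \<gamma> \<pi> s \<bullet> p) + bregman h p (\<pi> s)) (\<lambda>p. p \<in> actdist) (\<pi>' s))"

end

theory Submission
  imports Defs
begin

lemma dir_deriv:
  fixes h :: "'v::real_normed_vector \<Rightarrow> real"
  assumes "(h has_derivative L) (at x)"
  shows "((\<lambda>t. (h (x + t *\<^sub>R v) - h x) / t) \<longlongrightarrow> L v) (at_right (0::real))"
proof -
  have lin: "bounded_linear L" using assms has_derivative_bounded_linear by blast
  have d1: "((\<lambda>t::real. x + t *\<^sub>R v) has_derivative (\<lambda>t. t *\<^sub>R v)) (at 0)"
    by (auto intro!: derivative_eq_intros)
  have d2: "((\<lambda>t. h (x + t *\<^sub>R v)) has_derivative (\<lambda>t. L (t *\<^sub>R v))) (at 0)"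
    using has_derivative_compose[OF d1, of h L] assms by simp
  have eq: "(\<lambda>t. L (t *\<^sub>R v)) = (\<lambda>t. L v * t)"
    using lin by (auto simp: fun_eq_iff linear_simps(5) bounded_linear.linear)
  have "((\<lambda>t. h (x + t *\<^sub>R v)) has_derivative (\<lambda>t. L v * t)) (at 0)"
    using d2 unfolding eq .
  hence "((\<lambda>t. h (x + t *\<^sub>R v)) has_real_derivative L v) (at 0)"
    unfolding has_field_derivative_def by assumption
  hence "((\<lambda>t. (h (x + t *\<^sub>R v) - h x) / t) \<longlongrightarrow> L v) (at 0)"
    using has_field_derivative_iff[of "\<lambda>t. h (x + t *\<^sub>R v)" "L v" 0 UNIV] by simp
  thus ?thesis by (rule tendsto_mono[rotated]) (simp add: at_le)
qed

lemma grad_ineq: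
  fixes h :: "'v::real_normed_vector \<Rightarrow> real"
  assumes "(h has_derivative L) (at x)" "convex_on C h" "x \<in> C" "y \<in> C"
  shows "L (y - x) \<le> h y - h x"
proof -
  have lim: "((\<lambda>t. (h (x + t *\<^sub>R (y - x)) - h x) / t) \<longlongrightarrow> L (y - x)) (at_right (0::real))"
    by (rule dir_deriv[OF assms(1)])
  have ev: "\<forall>\<^sub>F t in at_right (0::real). (h (x + t *\<^sub>R (y - x)) - h x) / t \<le> h y - h x"
  proof -
    have "\<forall>\<^sub>F t in at_right (0::real). t < 1" by (simp add: eventually_at_right_field) (rule exI[of _ 1], simp)
    moreover have "\<forall>\<^sub>F t in at_right (0::real). t > 0" by (simp add: eventually_at_right_field) (rule exI[of _ 1], simp)
    ultimately show ?thesis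
    proof eventually_elim
      case (elim t)
      have "h ((1 - t) *\<^sub>R x + t *\<^sub>R y) \<le> (1 - t) * h x + t * h y"
        using assms(2-4) elim unfolding convex_on_def by auto
      moreover have "x + t *\<^sub>R (y - x) = (1 - t) *\<^sub>R x + t *\<^sub>R y" by (simp add: algebra_simps)
      ultimately have "h (x + t *\<^sub>R (y - x)) - h x \<le> t * (h y - h x)" by (simp add: algebra_simps)
      thus ?case using elim by (simp add: divide_le_eq mult.commute)
    qed
  qed
  show ?thesis using tendsto_upperbound[OF lim ev] by simp
qed

lemma actdist_comb:
  assumes "p \<in> actdist" "z \<in> actdist" "0 \<le> t" "t \<le> 1"
  shows "p - t *\<^sub>R (p - z) \<in> actdist"
proof -
  have "\<forall>a. 0 \<le> (1 - t) * p $ a + t * z $ a" using assms unfolding actdist_def by auto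
  moreover have "(\<Sum>a\<in>UNIV. (1 - t) * p $ a + t * z $ a) = 1"
    using assms unfolding actdist_def by (simp add: sum.distrib sum_distrib_left[symmetric])
  moreover have "\<And>a. (p - t *\<^sub>R (p - z)) $ a = (1 - t) * p $ a + t * z $ a"
    by (simp add: algebra_simps)
  ultimately show ?thesis unfolding actdist_def by simp
qed

lemma onorm_from_ball:
  fixes L :: "real^'a \<Rightarrow> real"
  assumes lin: "linear L" and r: "r > 0" and b: "\<And>w. norm w \<le> r \<Longrightarrow> L w \<le> K"
  shows "onorm L \<le> K / r"
proof (rule onorm_le)
  fix x :: "real^'a"
  show "norm (L x) \<le> K / r * norm x"
  proof (cases "x = 0")
    case True thus ?thesis using lin by (simp add: linear_0)
  next
    case False
    define w where "w = (r / norm x) *\<^sub>R x"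
    have nw: "norm w = r" using False r by (simp add: w_def)
    have "L w \<le> K" using b nw by simp
    moreover have "L (- w) \<le> K" using b nw by simp
    moreover have "L (- w) = - L w" using lin by (simp add: linear_neg)
    moreover have "L w = (r / norm x) * L x" using lin by (simp add: w_def linear_scale)
    ultimately have "\<bar>(r / norm x) * L x\<bar> \<le> K" by linarith
    hence "(r / norm x) * \<bar>L x\<bar> \<le> K" using r by (simp add: abs_mult)
    hence "r * \<bar>L x\<bar> \<le> K * norm x" using False by (simp add: field_simps)
    thus ?thesis using r by (simp add: field_simps mult.commute)
  qed
qed

lemma argmin_interior:
  fixes h :: "real^'a \<Rightarrow> real" and q :: "real^'a"
  assumes leg: "legendre C h" and dom: "actdist \<subseteq> C"
    and z: "z \<in> actdist" "z \<in> interior C"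
    and pmin: "is_arg_min (\<lambda>p. \<eta> * (q \<bullet> p) + bregman h p z) (\<lambda>p. p \<in> actdist) p"
  shows "p \<in> interior C"
proof (rule ccontr)
  assume nint: "p \<notin> interior C"
  have cvx: "convex C" and cvh: "convex_on C h" using leg unfolding legendre_def by auto
  have diffI: "\<And>x. x \<in> interior C \<Longrightarrow> (h has_derivative frechet_derivative h (at x)) (at x)"
    using leg unfolding legendre_def by (auto simp: frechet_derivative_works)
  have blow: "\<And>xs y. (\<forall>n. xs n \<in> interior C) \<Longrightarrow> xs \<longlonglongrightarrow> y \<Longrightarrow> y \<in> frontier (interior C) \<Longrightarrow>
        filterlim (\<lambda>n. onorm (frechet_derivative h (at (xs n)))) at_top sequentially"
    using leg unfolding legendre_def by blast
  have pA: "p \<in> actdist" using pmin unfolding is_arg_min_def by auto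
  have pC: "p \<in> C" using pA dom by auto
  have zC: "z \<in> C" using z dom by auto
  have opt: "\<And>y. y \<in> actdist \<Longrightarrow> \<eta> * (q \<bullet> p) + bregman h p z \<le> \<eta> * (q \<bullet> y) + bregman h y z"
    using pmin unfolding is_arg_min_def by (meson not_le)
  define Lz where "Lz = frechet_derivative h (at z)"
  have dz: "(h has_derivative Lz) (at z)" using diffI z unfolding Lz_def by auto
  have linz: "linear Lz" using dz has_derivative_linear by blast
  define v where "v = z - p"
  define xt where "xt = (\<lambda>t::real. p - t *\<^sub>R (p - z))"
  define Lt where "Lt = (\<lambda>t. frechet_derivative h (at (xt t)))"
  define c where "c = Lz v - \<eta> * (q \<bullet> v)"
  have xtint: "\<And>t. 0 < t \<Longrightarrow> t \<le> 1 \<Longrightarrow> xt t \<in> interior C"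
    unfolding xt_def by (rule mem_interior_convex_shrink[OF cvx z(2) pC])
  have xtA: "\<And>t. 0 \<le> t \<Longrightarrow> t \<le> 1 \<Longrightarrow> xt t \<in> actdist"
    unfolding xt_def using actdist_comb pA z(1) by blast
  have dt: "\<And>t. 0 < t \<Longrightarrow> t \<le> 1 \<Longrightarrow> (h has_derivative Lt t) (at (xt t))"
    unfolding Lt_def using xtint diffI by blast
  have lint: "\<And>t. 0 < t \<Longrightarrow> t \<le> 1 \<Longrightarrow> linear (Lt t)" using dt has_derivative_linear by blast
  have low: "Lt t v \<ge> c" if t: "0 < t" "t \<le> 1" for t
  proof -
    have g1: "Lt t (p - xt t) \<le> h p - h (xt t)"
      using grad_ineq[OF dt[OF t] cvh] xtint[OF t] interior_subset pC by blast
    have "p - xt t = (- t) *\<^sub>R v" unfolding xt_def v_def by (simp add: algebra_simps)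
    hence e1: "Lt t (p - xt t) = - t * Lt t v" using lint[OF t] by (simp add: linear_scale linear_neg)
    have o1: "\<eta> * (q \<bullet> p) + bregman h p z \<le> \<eta> * (q \<bullet> xt t) + bregman h (xt t) z"
      using opt xtA t by auto
    have xe: "xt t - z = p - z + t *\<^sub>R v" unfolding xt_def v_def by (simp add: algebra_simps)
    have "Lz (p - z + t *\<^sub>R v) = Lz (p - z) + t * Lz v" using linz by (simp add: linear_add linear_scale)
    hence e2: "Lz (xt t - z) = Lz (p - z) + t * Lz v" by (simp only: xe)
    have e3: "q \<bullet> xt t = q \<bullet> p + t * (q \<bullet> v)" unfolding xt_def v_def by (simp add: algebra_simps inner_diff_right)
    have "h (xt t) - h p \<ge> t * c"
      using o1 e2 e3 unfolding bregman_def Lz_def[symmetric] c_def by (simp add: algebra_simps)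
    hence "t * c \<le> t * Lt t v" using g1 e1 by linarith
    thus ?thesis using t by simp
  qed
  obtain r where r: "r > 0" "cball z r \<subseteq> interior C"
    using z(2) open_contains_cball open_interior by blast
  have "continuous_on (cball z r) h"
    using r(2) diffI by (meson continuous_at_imp_continuous_on has_derivative_continuous subsetD)
  hence "bounded (h ` cball z r)" by (simp add: compact_continuous_image compact_imp_bounded)
  then obtain B where B: "\<And>y. y \<in> cball z r \<Longrightarrow> \<bar>h y\<bar> \<le> B"
    unfolding bounded_iff by (metis (no_types, lifting) image_eqI real_norm_def)
  define K where "K = B - h z + \<bar>Lz v\<bar> + \<bar>c\<bar>"
  have bnd: "onorm (Lt t) \<le> K / r" if t: "0 < t" "t \<le> 1" for t
  proof (rule onorm_from_ball[OF lint[OF t] r(1)])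
    fix w :: "real^'a" assume w: "norm w \<le> r"
    define y where "y = z + w"
    have yb: "y \<in> cball z r" using w by (simp add: y_def dist_norm)
    hence yC: "y \<in> C" using r(2) interior_subset by blast
    have g1: "Lt t (y - xt t) \<le> h y - h (xt t)"
      using grad_ineq[OF dt[OF t] cvh] xtint[OF t] interior_subset yC by blast
    have ye: "y - xt t = (1 - t) *\<^sub>R v + w" unfolding y_def xt_def v_def by (simp add: algebra_simps)
    have "Lt t ((1 - t) *\<^sub>R v + w) = (1 - t) * Lt t v + Lt t w" using lint[OF t] by (simp add: linear_add linear_scale)
    hence e1: "Lt t (y - xt t) = (1 - t) * Lt t v + Lt t w" by (simp only: ye)
    have "xt t \<in> C" using xtA t dom by auto
    hence g2: "Lz (xt t - z) \<le> h (xt t) - h z"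
      using grad_ineq[OF dz cvh zC] by blast
    have xe: "xt t - z = (- (1 - t)) *\<^sub>R v" unfolding xt_def v_def by (simp add: algebra_simps)
    have "Lz ((- (1 - t)) *\<^sub>R v) = - (1 - t) * Lz v" using linz by (simp add: linear_scale)
    hence e2: "Lz (xt t - z) = - (1 - t) * Lz v" by (simp only: xe)
    have "(1 - t) * \<bar>Lz v\<bar> \<le> \<bar>Lz v\<bar>" using t by (simp add: mult_left_le_one_le)
    moreover have "(1 - t) * Lz v \<le> (1 - t) * \<bar>Lz v\<bar>" using t
      by (intro mult_left_mono) auto
    ultimately have hx: "h (xt t) \<ge> h z - \<bar>Lz v\<bar>" using g2 e2 by linarith
    have "(1 - t) * Lt t v \<ge> (1 - t) * c" using low[OF t] t by (simp add: mult_left_mono)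
    moreover have "(1 - t) * (- c) \<le> (1 - t) * \<bar>c\<bar>" using t
      by (intro mult_left_mono) auto
    moreover have "(1 - t) * \<bar>c\<bar> \<le> \<bar>c\<bar>" using t by (simp add: mult_left_le_one_le)
    moreover have "h y \<le> B" using B[OF yb] by simp
    ultimately show "Lt t w \<le> K" using g1 e1 hx unfolding K_def by linarith
  qed
  define xs where "xs = (\<lambda>n::nat. xt (1 / real (Suc n)))"
  have xsint: "\<forall>n. xs n \<in> interior C" unfolding xs_def using xtint by simp
  have "(\<lambda>n. 1 / real (Suc n)) \<longlonglongrightarrow> 0" using LIMSEQ_Suc[OF lim_const_over_n[of 1]] by simp
  hence "xs \<longlonglongrightarrow> p - 0 *\<^sub>R (p - z)" unfolding xs_def xt_def
    by (intro tendsto_intros)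
  hence lim: "xs \<longlonglongrightarrow> p" by simp
  have "p \<in> closure (interior C)" using closure_sequential xsint lim by blast
  hence fr: "p \<in> frontier (interior C)" using nint by (simp add: frontier_def)
  have "filterlim (\<lambda>n. onorm (Lt (1 / real (Suc n)))) at_top sequentially"
    using blow[OF xsint lim fr] unfolding xs_def Lt_def by simp
  hence "\<forall>\<^sub>F n in sequentially. onorm (Lt (1 / real (Suc n))) > K / r"
    by (simp add: filterlim_at_top_dense)
  then obtain N where "\<forall>n\<ge>N. onorm (Lt (1 / real (Suc n))) > K / r"
    unfolding eventually_sequentially by blast
  then obtain n where "onorm (Lt (1 / real (Suc n))) > K / r" by blast
  moreover have "onorm (Lt (1 / real (Suc n))) \<le> K / r" by (rule bnd) auto
  ultimately show False by simp
qed

lemma bregman_nonneg: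
  assumes leg: "legendre C h" and x: "x \<in> C" and z: "z \<in> interior C"
  shows "bregman h x z \<ge> 0"
proof -
  have "(h has_derivative frechet_derivative h (at z)) (at z)"
    using leg z unfolding legendre_def by (auto simp: frechet_derivative_works)
  moreover have "convex_on C h" using leg unfolding legendre_def by auto
  ultimately have "frechet_derivative h (at z) (x - z) \<le> h x - h z"
    using grad_ineq x z interior_subset by blast
  thus ?thesis unfolding bregman_def by simp
qed

lemma bregman_self:
  assumes leg: "legendre C h" and z: "z \<in> interior C"
  shows "bregman h z z = 0"
proof -
  have "(h has_derivative frechet_derivative h (at z)) (at z)"
    using leg z unfolding legendre_def by (auto simp: frechet_derivative_works)
  hence "linear (frechet_derivative h (at z))" using has_derivative_linear by blast
  thus ?thesis unfolding bregman_def by (simp add: linear_0)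
qed

lemma three_point:
  fixes h :: "real^'a \<Rightarrow> real" and q :: "real^'a"
  assumes leg: "legendre C h" and dom: "actdist \<subseteq> C"
    and z: "z \<in> actdist" "z \<in> interior C"
    and pmin: "is_arg_min (\<lambda>p. \<eta> * (q \<bullet> p) + bregman h p z) (\<lambda>p. p \<in> actdist) p"
    and x: "x \<in> actdist"
  shows "\<eta> * (q \<bullet> p) + bregman h p z \<le> \<eta> * (q \<bullet> x) + bregman h x z - bregman h x p"
proof -
  have pint: "p \<in> interior C" by (rule argmin_interior[OF leg dom z pmin])
  have diffI: "\<And>x. x \<in> interior C \<Longrightarrow> (h has_derivative frechet_derivative h (at x)) (at x)"
    using leg unfolding legendre_def by (auto simp: frechet_derivative_works)
  have pA: "p \<in> actdist" using pmin unfolding is_arg_min_def by auto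
  have opt: "\<And>y. y \<in> actdist \<Longrightarrow> \<eta> * (q \<bullet> p) + bregman h p z \<le> \<eta> * (q \<bullet> y) + bregman h y z"
    using pmin unfolding is_arg_min_def by (meson not_le)
  define Lz where "Lz = frechet_derivative h (at z)"
  define Lp where "Lp = frechet_derivative h (at p)"
  have dz: "(h has_derivative Lz) (at z)" using diffI z unfolding Lz_def by auto
  have dp: "(h has_derivative Lp) (at p)" using diffI pint unfolding Lp_def by auto
  have linz: "linear Lz" using dz has_derivative_linear by blast
  have linp: "linear Lp" using dp has_derivative_linear by blast
  define v where "v = x - p"
  have lim: "((\<lambda>t. (h (p + t *\<^sub>R v) - h p) / t) \<longlongrightarrow> Lp v) (at_right (0::real))"
    by (rule dir_deriv[OF dp])
  have ev: "\<forall>\<^sub>F t in at_right (0::real). Lz v - \<eta> * (q \<bullet> v) \<le> (h (p + t *\<^sub>R v) - h p) / t"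
  proof -
    have "\<forall>\<^sub>F t in at_right (0::real). t < 1" by (simp add: eventually_at_right_field) (rule exI[of _ 1], simp)
    moreover have "\<forall>\<^sub>F t in at_right (0::real). t > 0" by (simp add: eventually_at_right_field) (rule exI[of _ 1], simp)
    ultimately show ?thesis
    proof eventually_elim
      case (elim t)
      have yeq: "p + t *\<^sub>R v = p - t *\<^sub>R (p - x)" unfolding v_def by (simp add: algebra_simps)
      have "p + t *\<^sub>R v \<in> actdist" unfolding yeq using actdist_comb[OF pA x] elim by simp
      hence o1: "\<eta> * (q \<bullet> p) + bregman h p z \<le> \<eta> * (q \<bullet> (p + t *\<^sub>R v)) + bregman h (p + t *\<^sub>R v) z"
        by (rule opt)
      have e1: "Lz (p + t *\<^sub>R v - z) = Lz (p - z) + t * Lz v"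
      proof -
        have eq: "p + t *\<^sub>R v - z = (p - z) + t *\<^sub>R v" by (simp add: algebra_simps)
        have "Lz ((p - z) + t *\<^sub>R v) = Lz (p - z) + t * Lz v"
          using linz by (simp add: linear_add linear_scale)
        thus ?thesis by (simp only: eq)
      qed
      have e2: "q \<bullet> (p + t *\<^sub>R v) = q \<bullet> p + t * (q \<bullet> v)" by (simp add: inner_add_right)
      have "t * (Lz v - \<eta> * (q \<bullet> v)) \<le> h (p + t *\<^sub>R v) - h p"
        using o1 e1 e2 unfolding bregman_def Lz_def[symmetric] by (simp add: algebra_simps)
      thus ?case using elim by (simp add: le_divide_eq mult.commute)
    qed
  qed
  have key: "Lz v - \<eta> * (q \<bullet> v) \<le> Lp v" using tendsto_lowerbound[OF lim ev] by simp
  have "bregman h x z - bregman h x p - bregman h p z = Lp v - Lz v"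
  proof -
    have "Lz (x - z) = Lz (p - z) + Lz v" unfolding v_def using linz
      by (metis add.commute diff_add_cancel diff_diff_eq2 linear_add)
    thus ?thesis unfolding bregman_def Lz_def[symmetric] Lp_def[symmetric] v_def by simp
  qed
  moreover have "q \<bullet> x = q \<bullet> p + q \<bullet> v" unfolding v_def by (simp add: inner_diff_right)
  ultimately show ?thesis using key by (simp add: algebra_simps)
qed

lemma pmd_descent:
  fixes h :: "real^'a \<Rightarrow> real" and q :: "real^'a"
  assumes leg: "legendre C h" and dom: "actdist \<subseteq> C"
    and z: "z \<in> actdist" "z \<in> interior C"
    and pmin: "is_arg_min (\<lambda>p. \<eta> * (q \<bullet> p) + bregman h p z) (\<lambda>p. p \<in> actdist) p"
    and eta: "\<eta> \<ge> 0"
  shows "q \<bullet> p \<le> q \<bullet> z"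
proof -
  have pint: "p \<in> interior C" by (rule argmin_interior[OF leg dom z pmin])
  have pA: "p \<in> actdist" using pmin unfolding is_arg_min_def by auto
  have tp: "\<eta> * (q \<bullet> p) + bregman h p z \<le> \<eta> * (q \<bullet> z) + bregman h z z - bregman h z p"
    by (rule three_point[OF leg dom z pmin z(1)])
  have b1: "bregman h p z \<ge> 0" using bregman_nonneg[OF leg _ z(2)] pA dom by auto
  have b2: "bregman h z p \<ge> 0" using bregman_nonneg[OF leg _ pint] z dom by auto
  have b0: "bregman h z z = 0" by (rule bregman_self[OF leg z(2)])
  have main: "\<eta> * (q \<bullet> p) + bregman h p z + bregman h z p \<le> \<eta> * (q \<bullet> z)" using tp b0 by simp
  show ?thesis
  proof (cases "\<eta> > 0")
    case True
    hence "\<eta> * (q \<bullet> p) \<le> \<eta> * (q \<bullet> z)" using main b1 b2 by linarith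
    thus ?thesis using True by simp
  next
    case False
    hence e0: "\<eta> = 0" using eta by simp
    hence bz: "bregman h p z = 0" using main b1 b2 by simp
    have "p = z"
    proof (rule ccontr)
      assume ne: "p \<noteq> z"
      have "interior C \<noteq> {}" using z by auto
      hence ri: "rel_interior C = interior C" by (rule rel_interior_nonempty_interior)
      have sc: "strictly_convex_on (rel_interior C) h" using leg unfolding legendre_def by auto
      have "\<forall>u. 0 < u \<and> u < 1 \<longrightarrow> h (u *\<^sub>R p + (1 - u) *\<^sub>R z) < u * h p + (1 - u) * h z"
        using sc ne pint z(2) unfolding strictly_convex_on_def ri by blast
      moreover have "0 < (1/2::real) \<and> (1/2::real) < 1" by simp
      ultimately have lt0: "h ((1/2) *\<^sub>R p + (1 - 1/2) *\<^sub>R z) < (1/2) * h p + (1 - 1/2) * h z"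
        by blast
      have eqh: "1 - 1/2 = (1/2::real)" by simp
      have lt: "h ((1/2) *\<^sub>R p + (1/2) *\<^sub>R z) < (1/2) * h p + (1/2) * h z"
        using lt0 unfolding eqh .
      define Lz where "Lz = frechet_derivative h (at z)"
      have dz: "(h has_derivative Lz) (at z)"
        using leg z unfolding legendre_def Lz_def by (auto simp: frechet_derivative_works)
      have linz: "linear Lz" using dz has_derivative_linear by blast
      have cvh: "convex_on C h" using leg unfolding legendre_def by auto
      have cvx: "convex C" using leg unfolding legendre_def by auto
      have mC: "(1/2) *\<^sub>R p + (1/2) *\<^sub>R z \<in> C"
      proof -
        have "p \<in> C" "z \<in> C" using pA z dom by auto
        thus ?thesis using cvx unfolding convex_def by (metis field_sum_of_halves less_eq_real_def zero_less_divide_1_iff zero_less_numeral)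
      qed
      have g: "Lz ((1/2) *\<^sub>R p + (1/2) *\<^sub>R z - z) \<le> h ((1/2) *\<^sub>R p + (1/2) *\<^sub>R z) - h z"
        using grad_ineq[OF dz cvh _ mC] z dom by auto
      have "(1/2) *\<^sub>R p + (1/2) *\<^sub>R z - z = (1/2) *\<^sub>R (p - z)" by (simp add: vec_eq_iff field_simps)
      hence "Lz ((1/2) *\<^sub>R p + (1/2) *\<^sub>R z - z) = (1/2) * Lz (p - z)"
        using linz by (simp add: linear_scale)
      moreover have "h p = h z + Lz (p - z)" using bz unfolding bregman_def Lz_def by simp
      ultimately show False using g lt by simp
    qed
    thus ?thesis by simp
  qed
qed

lemma sum_pos_le1:
  fixes f :: "'s::finite \<Rightarrow> real"
  assumes "\<forall>x. 0 \<le> f x" "(\<Sum>x\<in>UNIV. f x) = 1"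
  shows "f y \<le> 1"
  using member_le_sum[of y UNIV f] assms by auto

lemma delta1: fixes f :: "'s::finite \<Rightarrow> real" shows "(\<Sum>x\<in>UNIV. (if a = x then 1 else 0) * f x) = (f a :: real)"
proof -
  have "(\<Sum>x\<in>UNIV. (if a = x then 1 else 0) * f x) = (\<Sum>x\<in>UNIV. if a = x then f x else 0)"
    by (rule sum.cong) auto
  thus ?thesis by simp
qed

lemma delta2: fixes f :: "'s::finite \<Rightarrow> real" shows "(\<Sum>x\<in>UNIV. f x * (if x = a then 1 else 0)) = (f a :: real)"
proof -
  have "(\<Sum>x\<in>UNIV. f x * (if x = a then 1 else 0)) = (\<Sum>x\<in>UNIV. if a = x then f x else 0)"
    by (rule sum.cong) auto
  thus ?thesis by simp
qed

context
  fixes P :: "'s::finite \<Rightarrow> 'a::finite \<Rightarrow> 's \<Rightarrow> real" and R :: "'s \<Rightarrow> 'a \<Rightarrow> real" and \<gamma> :: real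
  assumes mdp: "is_mdp P R \<gamma>"
begin

lemma gam: "0 < \<gamma>" "\<gamma> < 1" using mdp unfolding is_mdp_def by auto

lemma Ppol_nonneg: "\<pi> \<in> policies \<Longrightarrow> 0 \<le> Ppol P \<pi> s s'"
  unfolding Ppol_def
proof (rule sum_nonneg)
  fix a assume "\<pi> \<in> policies"
  hence "0 \<le> \<pi> s $ a" unfolding policies_def actdist_def by auto
  moreover have "0 \<le> P s a s'" using mdp unfolding is_mdp_def by auto
  ultimately show "0 \<le> \<pi> s $ a * P s a s'" by simp
qed

lemma Ppol_sum: "\<pi> \<in> policies \<Longrightarrow> (\<Sum>s'\<in>UNIV. Ppol P \<pi> s s') = 1"
proof -
  assume pi: "\<pi> \<in> policies"
  have "(\<Sum>s'\<in>UNIV. Ppol P \<pi> s s') = (\<Sum>a\<in>UNIV. \<pi> s $ a * (\<Sum>s'\<in>UNIV. P s a s'))"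
    unfolding Ppol_def sum_distrib_left by (rule sum.swap)
  also have "\<dots> = (\<Sum>a\<in>UNIV. \<pi> s $ a)" using mdp unfolding is_mdp_def by simp
  also have "\<dots> = 1" using pi unfolding policies_def actdist_def by auto
  finally show ?thesis .
qed

lemma Pstep_nonneg: "\<pi> \<in> policies \<Longrightarrow> 0 \<le> Pstep P \<pi> t s s'"
  by (induction t arbitrary: s') (auto intro!: sum_nonneg mult_nonneg_nonneg Ppol_nonneg)

lemma Pstep_sum: "\<pi> \<in> policies \<Longrightarrow> (\<Sum>s'\<in>UNIV. Pstep P \<pi> t s s') = 1"
proof (induction t)
  case 0 thus ?case by simp
next
  case (Suc t)
  have "(\<Sum>s''\<in>UNIV. Pstep P \<pi> (Suc t) s s'') = (\<Sum>s'\<in>UNIV. Pstep P \<pi> t s s' * (\<Sum>s''\<in>UNIV. Ppol P \<pi> s' s''))"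
    unfolding Pstep.simps sum_distrib_left sum_distrib_right by (rule sum.swap)
  also have "\<dots> = 1" using Suc Ppol_sum by simp
  finally show ?case .
qed

lemma Pstep_le1: "\<pi> \<in> policies \<Longrightarrow> Pstep P \<pi> t s s' \<le> 1"
  using sum_pos_le1[of "Pstep P \<pi> t s"] Pstep_nonneg Pstep_sum by blast

lemma Pstep_Suc_left: "Pstep P \<pi> (Suc t) s s'' = (\<Sum>s'\<in>UNIV. Ppol P \<pi> s s' * Pstep P \<pi> t s' s'')"
proof (induction t arbitrary: s'')
  case 0 show ?case by (simp only: Pstep.simps delta1 delta2)
next
  case (Suc t)
  have "Pstep P \<pi> (Suc (Suc t)) s s'' = (\<Sum>s'\<in>UNIV. (\<Sum>u\<in>UNIV. Ppol P \<pi> s u * Pstep P \<pi> t u s') * Ppol P \<pi> s' s'')"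
    using Suc by simp
  also have "\<dots> = (\<Sum>u\<in>UNIV. Ppol P \<pi> s u * (\<Sum>s'\<in>UNIV. Pstep P \<pi> t u s' * Ppol P \<pi> s' s''))"
    unfolding sum_distrib_left sum_distrib_right by (rule trans[OF sum.swap]) (simp add: mult_ac)
  also have "\<dots> = (\<Sum>u\<in>UNIV. Ppol P \<pi> s u * Pstep P \<pi> (Suc t) u s'')" by simp
  finally show ?case .
qed

definition E :: "('s \<Rightarrow> real^'a) \<Rightarrow> nat \<Rightarrow> 's \<Rightarrow> ('s \<Rightarrow> real) \<Rightarrow> real" where
  "E \<pi> t s g = (\<Sum>s'\<in>UNIV. Pstep P \<pi> t s s' * g s')"

lemma E_bound: "\<pi> \<in> policies \<Longrightarrow> \<bar>E \<pi> t s g\<bar> \<le> (\<Sum>s'\<in>UNIV. \<bar>g s'\<bar>)"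
proof -
  assume pi: "\<pi> \<in> policies"
  have "\<bar>E \<pi> t s g\<bar> \<le> (\<Sum>s'\<in>UNIV. \<bar>Pstep P \<pi> t s s' * g s'\<bar>)" unfolding E_def by (rule sum_abs)
  also have "\<dots> \<le> (\<Sum>s'\<in>UNIV. \<bar>g s'\<bar>)"
  proof (rule sum_mono)
    fix s' have "0 \<le> Pstep P \<pi> t s s'" "Pstep P \<pi> t s s' \<le> 1" using pi Pstep_nonneg Pstep_le1 by auto
    thus "\<bar>Pstep P \<pi> t s s' * g s'\<bar> \<le> \<bar>g s'\<bar>" by (simp add: abs_mult mult_left_le_one_le)
  qed
  finally show ?thesis .
qed

lemma E_summable: "\<pi> \<in> policies \<Longrightarrow> summable (\<lambda>t. \<gamma> ^ t * E \<pi> t s g)"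
proof -
  assume pi: "\<pi> \<in> policies"
  have sg: "summable (\<lambda>t. (\<Sum>s'\<in>UNIV. \<bar>g s'\<bar>) * \<gamma> ^ t)"
    using gam by (intro summable_mult summable_geometric) auto
  have nb: "norm (\<gamma> ^ t * E \<pi> t s g) \<le> (\<Sum>s'\<in>UNIV. \<bar>g s'\<bar>) * \<gamma> ^ t" for t
  proof -
    have "\<gamma> ^ t * \<bar>E \<pi> t s g\<bar> \<le> \<gamma> ^ t * (\<Sum>s'\<in>UNIV. \<bar>g s'\<bar>)"
      using E_bound[OF pi] gam by (intro mult_left_mono) auto
    moreover have "norm (\<gamma> ^ t * E \<pi> t s g) = \<gamma> ^ t * \<bar>E \<pi> t s g\<bar>"
      using gam by (simp add: abs_mult)
    ultimately show ?thesis by (simp only: mult.commute)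
  qed
  show ?thesis by (rule summable_comparison_test'[OF sg nb])
qed

lemma E_tendsto: "\<pi> \<in> policies \<Longrightarrow> (\<lambda>t. \<gamma> ^ t * E \<pi> t s g) \<longlonglongrightarrow> 0"
  using E_summable summable_LIMSEQ_zero by blast

lemma E_0: "E \<pi> 0 s g = g s"
  unfolding E_def Pstep.simps by (rule delta1)

lemma E_Suc: "E \<pi> (Suc t) s g = E \<pi> t s (\<lambda>s'. \<Sum>s''\<in>UNIV. Ppol P \<pi> s' s'' * g s'')"
  unfolding E_def Pstep.simps sum_distrib_left sum_distrib_right by (rule trans[OF sum.swap]) (simp add: mult_ac)

lemma E_Suc_left: "E \<pi> (Suc t) s g = (\<Sum>s'\<in>UNIV. Ppol P \<pi> s s' * E \<pi> t s' g)"
  unfolding E_def Pstep_Suc_left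
  unfolding sum_distrib_left sum_distrib_right by (rule trans[OF sum.swap]) (simp add: mult_ac)

lemma E_lin: "E \<pi> t s (\<lambda>x. f x + c * g x - k x) = E \<pi> t s f + c * E \<pi> t s g - E \<pi> t s k"
  unfolding E_def by (simp add: algebra_simps sum.distrib sum_subtractf sum_distrib_left)

lemma Vs_E: "Vs P R \<gamma> \<pi> s = (\<Sum>t. \<gamma> ^ t * E \<pi> t s (Rpol R \<pi>))"
  unfolding Vs_def E_def ..

lemma bellman:
  assumes pi: "\<pi> \<in> policies"
  shows "Vs P R \<gamma> \<pi> s = Rpol R \<pi> s + \<gamma> * (\<Sum>s'\<in>UNIV. Ppol P \<pi> s s' * Vs P R \<gamma> \<pi> s')"
proof -
  let ?f = "\<lambda>t. \<gamma> ^ t * E \<pi> t s (Rpol R \<pi>)"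
  have "Vs P R \<gamma> \<pi> s = (\<Sum>t. ?f (Suc t)) + ?f 0"
    unfolding Vs_E using suminf_split_head[OF E_summable[OF pi]] by simp
  also have "?f 0 = Rpol R \<pi> s" by (simp add: E_0)
  also have "(\<Sum>t. ?f (Suc t)) = (\<Sum>t. \<Sum>s'\<in>UNIV. \<gamma> * (Ppol P \<pi> s s' * (\<gamma> ^ t * E \<pi> t s' (Rpol R \<pi>))))"
    by (simp add: E_Suc_left sum_distrib_left mult_ac)
  also have "\<dots> = (\<Sum>s'\<in>UNIV. \<Sum>t. \<gamma> * (Ppol P \<pi> s s' * (\<gamma> ^ t * E \<pi> t s' (Rpol R \<pi>))))"
    by (rule suminf_sum) (intro summable_mult E_summable[OF pi])
  also have "\<dots> = (\<Sum>s'\<in>UNIV. \<gamma> * (Ppol P \<pi> s s' * Vs P R \<gamma> \<pi> s'))"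
    unfolding Vs_E by (subst suminf_mult[symmetric], intro summable_mult E_summable[OF pi])+ simp
  finally show ?thesis by (simp add: sum_distrib_left)
qed

lemma inner_Q:
  "\<pi>' s \<bullet> Qsa P R \<gamma> \<pi> s = Rpol R \<pi>' s + \<gamma> * (\<Sum>s'\<in>UNIV. Ppol P \<pi>' s s' * Vs P R \<gamma> \<pi> s')"
proof -
  have "(\<Sum>a\<in>UNIV. \<pi>' s $ a * (\<gamma> * (\<Sum>s'\<in>UNIV. P s a s' * Vs P R \<gamma> \<pi> s'))) =
      \<gamma> * (\<Sum>s'\<in>UNIV. Ppol P \<pi>' s s' * Vs P R \<gamma> \<pi> s')"
    unfolding Ppol_def sum_distrib_left sum_distrib_right by (rule trans[OF sum.swap]) (simp add: mult_ac)
  thus ?thesis unfolding Qsa_def Rpol_def inner_vec_def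
    by (simp add: distrib_left sum.distrib)
qed

lemma V_inner_Q: "\<pi> \<in> policies \<Longrightarrow> \<pi> s \<bullet> Qsa P R \<gamma> \<pi> s = Vs P R \<gamma> \<pi> s"
  using inner_Q bellman by simp

lemma dvis_E: "dvis P \<gamma> \<pi> s s' = (1 - \<gamma>) * (\<Sum>t. \<gamma> ^ t * E \<pi> t s (\<lambda>x. if x = s' then 1 else 0))"
  unfolding dvis_def E_def by (simp add: if_distrib cong: if_cong)

lemma perf_diff:
  assumes pi: "\<pi> \<in> policies" and pi': "\<pi>' \<in> policies"
  shows "(1 - \<gamma>) * (Vs P R \<gamma> \<pi>' s - Vs P R \<gamma> \<pi> s) =
     (\<Sum>s'\<in>UNIV. dvis P \<gamma> \<pi>' s s' * ((\<pi>' s' - \<pi> s') \<bullet> Qsa P R \<gamma> \<pi> s'))"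
proof -
  define V where "V = Vs P R \<gamma> \<pi>"
  define g where "g = (\<lambda>s'. (\<pi>' s' - \<pi> s') \<bullet> Qsa P R \<gamma> \<pi> s')"
  have g: "g = (\<lambda>x. Rpol R \<pi>' x + \<gamma> * (\<Sum>s''\<in>UNIV. Ppol P \<pi>' x s'' * V s'') - V x)"
  proof (rule ext)
    fix x
    have a1: "\<pi>' x \<bullet> Qsa P R \<gamma> \<pi> x = Rpol R \<pi>' x + \<gamma> * (\<Sum>s''\<in>UNIV. Ppol P \<pi>' x s'' * V s'')"
      unfolding V_def by (rule inner_Q)
    have a2: "\<pi> x \<bullet> Qsa P R \<gamma> \<pi> x = V x" unfolding V_def by (rule V_inner_Q[OF pi])
    show "g x = Rpol R \<pi>' x + \<gamma> * (\<Sum>s''\<in>UNIV. Ppol P \<pi>' x s'' * V s'') - V x"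
      unfolding g_def inner_diff_left a1 a2 ..
  qed
  define a where "a = (\<lambda>t. \<gamma> ^ t * E \<pi>' t s V)"
  have trm: "\<gamma> ^ t * E \<pi>' t s g = \<gamma> ^ t * E \<pi>' t s (Rpol R \<pi>') + (a (Suc t) - a t)" for t
    unfolding g E_lin a_def E_Suc by (simp add: algebra_simps)
  have s1: "(\<lambda>t. \<gamma> ^ t * E \<pi>' t s (Rpol R \<pi>')) sums Vs P R \<gamma> \<pi>' s"
    unfolding Vs_E using E_summable[OF pi'] by (simp add: summable_sums)
  have s2: "(\<lambda>t. a (Suc t) - a t) sums (0 - a 0)"
    by (rule telescope_sums) (unfold a_def, rule E_tendsto[OF pi'])
  have "(\<lambda>t. \<gamma> ^ t * E \<pi>' t s g) sums (Vs P R \<gamma> \<pi>' s + (0 - a 0))"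
    unfolding trm using sums_add[OF s1 s2] .
  moreover have "a 0 = V s" unfolding a_def by (simp add: E_0)
  ultimately have S: "(\<Sum>t. \<gamma> ^ t * E \<pi>' t s g) = Vs P R \<gamma> \<pi>' s - V s" by (simp add: sums_iff)
  have "(\<Sum>s'\<in>UNIV. dvis P \<gamma> \<pi>' s s' * g s') =
      (1 - \<gamma>) * (\<Sum>s'\<in>UNIV. \<Sum>t. \<gamma> ^ t * E \<pi>' t s (\<lambda>x. if x = s' then 1 else 0) * g s')"
    unfolding dvis_E by (simp add: sum_distrib_left suminf_mult2 E_summable[OF pi'] mult.assoc)
  also have "(\<Sum>s'\<in>UNIV. \<Sum>t. \<gamma> ^ t * E \<pi>' t s (\<lambda>x. if x = s' then 1 else 0) * g s') =
       (\<Sum>t. \<Sum>s'\<in>UNIV. \<gamma> ^ t * E \<pi>' t s (\<lambda>x. if x = s' then 1 else 0) * g s')"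
    by (rule suminf_sum[symmetric]) (intro summable_mult2 E_summable[OF pi'])
  also have "(\<lambda>t. \<Sum>s'\<in>UNIV. \<gamma> ^ t * E \<pi>' t s (\<lambda>x. if x = s' then 1 else 0) * g s') = (\<lambda>t. \<gamma> ^ t * E \<pi>' t s g)"
    unfolding E_def by (simp add: if_distrib sum_distrib_left mult_ac cong: if_cong)
  finally have F: "(\<Sum>s'\<in>UNIV. dvis P \<gamma> \<pi>' s s' * g s') = (1 - \<gamma>) * (Vs P R \<gamma> \<pi>' s - V s)"
    unfolding S .
  thus ?thesis unfolding g_def V_def by simp
qed

lemma E_ind: "E \<pi> t s (\<lambda>x. if x = s' then 1 else 0) = Pstep P \<pi> t s s'"
  unfolding E_def by (rule delta2)

lemma dvis_nonneg: assumes pi: "\<pi> \<in> policies" shows "0 \<le> dvis P \<gamma> \<pi> s s'"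
proof -
  have "0 \<le> (\<Sum>t. \<gamma> ^ t * E \<pi> t s (\<lambda>x. if x = s' then 1 else 0))"
    by (rule suminf_nonneg[OF E_summable[OF pi]]) (use gam in \<open>simp add: E_ind Pstep_nonneg[OF pi]\<close>)
  thus ?thesis unfolding dvis_E using gam by simp
qed

lemma dvis_diag: assumes pi: "\<pi> \<in> policies" shows "1 - \<gamma> \<le> dvis P \<gamma> \<pi> s s"
proof -
  let ?f = "\<lambda>t. \<gamma> ^ t * E \<pi> t s (\<lambda>x. if x = s then 1 else 0)"
  have nn: "\<forall>n\<in>- {0}. 0 \<le> ?f n" using gam by (simp add: E_ind Pstep_nonneg[OF pi])
  have "sum ?f {0} \<le> (\<Sum>t. ?f t)"
    by (rule sum_le_suminf[OF E_summable[OF pi]]) (use nn in auto)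
  moreover have "?f 0 = 1" by (simp add: E_ind)
  ultimately have "1 \<le> (\<Sum>t. ?f t)" by simp
  thus ?thesis unfolding dvis_E using gam by simp
qed

lemma dvis_sum: assumes pi: "\<pi> \<in> policies" shows "(\<Sum>s'\<in>UNIV. dvis P \<gamma> \<pi> s s') = 1"
proof -
  have "(\<Sum>s'\<in>UNIV. \<Sum>t. \<gamma> ^ t * E \<pi> t s (\<lambda>x. if x = s' then 1 else 0)) =
        (\<Sum>t. \<Sum>s'\<in>UNIV. \<gamma> ^ t * E \<pi> t s (\<lambda>x. if x = s' then 1 else 0))"
    by (rule suminf_sum[symmetric]) (rule E_summable[OF pi])
  also have "\<dots> = (\<Sum>t. \<gamma> ^ t)"
    by (simp add: E_ind sum_distrib_left[symmetric] Pstep_sum[OF pi])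
  also have "\<dots> = 1 / (1 - \<gamma>)" using gam by (simp add: suminf_geometric)
  finally show ?thesis unfolding dvis_E using gam by (simp add: sum_distrib_left[symmetric])
qed

end

lemma recur:
  fixes \<Delta> D \<eta> :: "nat \<Rightarrow> real" and \<theta> c :: real
  assumes c: "0 < c" "c < 1" and th: "\<theta> * c \<ge> 1"
    and eta: "\<And>k. \<eta> k > 0" "\<And>k. (\<theta> - 1) * \<eta> (Suc k) \<ge> \<theta> * \<eta> k"
    and D: "\<And>k. D k \<ge> 0"
    and step: "\<And>k. \<theta> * \<Delta> (Suc k) \<le> (\<theta> - 1) * \<Delta> k + (D k - D (Suc k)) / (c * \<eta> k)"
  shows "\<Delta> k \<le> (1 - 1/\<theta>)^k * (\<Delta> 0 + D 0 / (\<eta> 0 * (1 - c)))"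
proof -
  have th1: "\<theta> > 1"
  proof (rule ccontr)
    assume "\<not> \<theta> > 1"
    hence "\<theta> * c \<le> 1 * c" using c by (intro mult_right_mono) auto
    hence "\<theta> * c \<le> c" by (simp only: mult_1_left)
    thus False using th c(2) by linarith
  qed
  define \<Phi> where "\<Phi> = (\<lambda>k. \<Delta> k + D k / ((\<theta> - 1) * c * \<eta> k))"
  have rec: "\<Phi> (Suc k) \<le> (1 - 1/\<theta>) * \<Phi> k" for k
  proof -
    have p1: "(\<theta> - 1) * c * \<eta> (Suc k) \<ge> \<theta> * c * \<eta> k"
      using eta(2)[of k] c by (simp add: mult.assoc mult.left_commute[of c] mult_left_mono)
    have pos: "\<theta> * c * \<eta> k > 0" using th1 c eta(1)[of k] by simp
    have f1: "D (Suc k) / ((\<theta> - 1) * c * \<eta> (Suc k)) \<le> D (Suc k) / (\<theta> * c * \<eta> k)"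
      by (rule divide_left_mono[OF p1 D]) (use pos p1 in auto)
    have s2: "\<Delta> (Suc k) \<le> ((\<theta> - 1) / \<theta>) * \<Delta> k + (D k - D (Suc k)) / (\<theta> * c * \<eta> k)"
    proof -
      have "\<Delta> (Suc k) \<le> ((\<theta> - 1) * \<Delta> k + (D k - D (Suc k)) / (c * \<eta> k)) / \<theta>"
        using step[of k] th1 by (simp add: le_divide_eq mult.commute)
      also have "\<dots> = ((\<theta> - 1) / \<theta>) * \<Delta> k + (D k - D (Suc k)) / (\<theta> * c * \<eta> k)"
        using th1 c eta(1)[of k] by (simp add: field_simps)
      finally show ?thesis .
    qed
    have e3: "(1 - 1/\<theta>) * \<Phi> k = ((\<theta> - 1) / \<theta>) * \<Delta> k + D k / (\<theta> * c * \<eta> k)"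
      unfolding \<Phi>_def using th1 c eta(1)[of k] by (simp add: field_simps)
    have e4: "(D k - D (Suc k)) / (\<theta> * c * \<eta> k) = D k / (\<theta> * c * \<eta> k) - D (Suc k) / (\<theta> * c * \<eta> k)"
      by (simp add: diff_divide_distrib)
    show ?thesis unfolding e3 using s2 f1 e4 unfolding \<Phi>_def by linarith
  qed
  have q0: "0 \<le> 1 - 1/\<theta>" using th1 by simp
  have ind: "\<Phi> k \<le> (1 - 1/\<theta>)^k * \<Phi> 0" for k
  proof (induction k)
    case 0 thus ?case by simp
  next
    case (Suc k)
    have "\<Phi> (Suc k) \<le> (1 - 1/\<theta>) * \<Phi> k" by (rule rec)
    also have "\<dots> \<le> (1 - 1/\<theta>) * ((1 - 1/\<theta>)^k * \<Phi> 0)" using Suc q0 by (rule mult_left_mono)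
    finally show ?case by (simp add: mult.assoc)
  qed
  have "\<Delta> k \<le> \<Phi> k" unfolding \<Phi>_def using D[of k] th1 c eta(1)[of k] by simp
  moreover have "\<Phi> 0 \<le> \<Delta> 0 + D 0 / (\<eta> 0 * (1 - c))"
  proof -
    have "(1 - c) * \<eta> 0 \<le> (\<theta> - 1) * c * \<eta> 0"
      using th eta(1)[of 0] by (intro mult_right_mono) (auto simp: algebra_simps)
    hence "D 0 / ((\<theta> - 1) * c * \<eta> 0) \<le> D 0 / ((1 - c) * \<eta> 0)"
      using c eta(1)[of 0] D[of 0] by (intro divide_left_mono) auto
    thus ?thesis unfolding \<Phi>_def by (simp add: mult.commute)
  qed
  ultimately show ?thesis using ind[of k] mult_left_mono[OF _ zero_le_power[OF q0, of k]] by (meson order_trans)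
qed

lemma drho_nonneg:
  assumes mdp: "is_mdp P R \<gamma>" and pi: "\<pi> \<in> policies" and rho: "\<forall>s. 0 \<le> \<rho> s"
  shows "0 \<le> drho P \<gamma> \<rho> \<pi> s'"
  unfolding drho_def using dvis_nonneg[OF mdp pi] rho by (intro sum_nonneg mult_nonneg_nonneg) auto

lemma drho_ge:
  assumes mdp: "is_mdp P R \<gamma>" and pi: "\<pi> \<in> policies" and rho: "\<forall>s. 0 \<le> \<rho> s"
  shows "(1 - \<gamma>) * \<rho> s' \<le> drho P \<gamma> \<rho> \<pi> s'"
proof -
  have "\<rho> s' * dvis P \<gamma> \<pi> s' s' \<le> drho P \<gamma> \<rho> \<pi> s'"
    unfolding drho_def using dvis_nonneg[OF mdp pi] rho
    by (intro member_le_sum) auto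
  moreover have "\<rho> s' * (1 - \<gamma>) \<le> \<rho> s' * dvis P \<gamma> \<pi> s' s'"
    using dvis_diag[OF mdp pi] rho by (intro mult_left_mono) auto
  ultimately show ?thesis by (simp add: mult.commute)
qed

lemma drho_sum:
  assumes mdp: "is_mdp P R \<gamma>" and pi: "\<pi> \<in> policies" and rho: "(\<Sum>s\<in>UNIV. \<rho> s) = 1"
  shows "(\<Sum>s'\<in>UNIV. drho P \<gamma> \<rho> \<pi> s') = 1"
proof -
  have "(\<Sum>s'\<in>UNIV. drho P \<gamma> \<rho> \<pi> s') = (\<Sum>s\<in>UNIV. \<rho> s * (\<Sum>s'\<in>UNIV. dvis P \<gamma> \<pi> s s'))"
    unfolding drho_def sum_distrib_left by (rule sum.swap)
  also have "\<dots> = 1" using dvis_sum[OF mdp pi] rho by simp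
  finally show ?thesis .
qed

lemma perf_diff_rho:
  assumes mdp: "is_mdp P R \<gamma>" and pi: "\<pi> \<in> policies" and pi': "\<pi>' \<in> policies"
  shows "(1 - \<gamma>) * (Vrho P R \<gamma> \<rho> \<pi>' - Vrho P R \<gamma> \<rho> \<pi>) =
     (\<Sum>s'\<in>UNIV. drho P \<gamma> \<rho> \<pi>' s' * ((\<pi>' s' - \<pi> s') \<bullet> Qsa P R \<gamma> \<pi> s'))"
proof -
  have "(1 - \<gamma>) * (Vrho P R \<gamma> \<rho> \<pi>' - Vrho P R \<gamma> \<rho> \<pi>) =
      (\<Sum>s\<in>UNIV. \<rho> s * ((1 - \<gamma>) * (Vs P R \<gamma> \<pi>' s - Vs P R \<gamma> \<pi> s)))"
    unfolding Vrho_def sum_subtractf[symmetric] sum_distrib_left by (rule sum.cong) (auto simp: algebra_simps)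
  also have "\<dots> = (\<Sum>s\<in>UNIV. \<rho> s * (\<Sum>s'\<in>UNIV. dvis P \<gamma> \<pi>' s s' * ((\<pi>' s' - \<pi> s') \<bullet> Qsa P R \<gamma> \<pi> s')))"
    using perf_diff[OF mdp pi pi'] by simp
  also have "\<dots> = (\<Sum>s'\<in>UNIV. drho P \<gamma> \<rho> \<pi>' s' * ((\<pi>' s' - \<pi> s') \<bullet> Qsa P R \<gamma> \<pi> s'))"
    unfolding drho_def sum_distrib_left sum_distrib_right by (rule trans[OF sum.swap]) (simp add: mult_ac)
  finally show ?thesis .
qed

lemma Vstar_eq:
  assumes opt: "\<pi>s \<in> policies" "\<forall>\<pi>'\<in>policies. \<forall>s. Vs P R \<gamma> \<pi>s s \<le> Vs P R \<gamma> \<pi>' s"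
    and rho: "\<forall>s. 0 \<le> \<rho> s"
  shows "Vstar P R \<gamma> \<rho> = Vrho P R \<gamma> \<rho> \<pi>s"
proof -
  have le: "Vrho P R \<gamma> \<rho> \<pi>s \<le> Vrho P R \<gamma> \<rho> \<pi>'" if "\<pi>' \<in> policies" for \<pi>'
    unfolding Vrho_def using opt(2) that rho by (intro sum_mono mult_left_mono) auto
  show ?thesis unfolding Vstar_def
    by (rule cInf_eq_minimum) (use opt(1) le in auto)
qed

theorem theorem10:
  fixes P :: "'s::finite \<Rightarrow> 'a::finite \<Rightarrow> 's \<Rightarrow> real"
    and R :: "'s \<Rightarrow> 'a \<Rightarrow> real"
    and \<gamma> :: real
    and C :: "(real^'a) set" and h :: "real^'a \<Rightarrow> real"
    and \<rho> :: "'s \<Rightarrow> real"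
    and \<pi>s :: "'s \<Rightarrow> real^'a"
    and \<pi> :: "nat \<Rightarrow> 's \<Rightarrow> real^'a"
    and \<eta> :: "nat \<Rightarrow> real"
    and \<theta> :: ereal
  assumes mdp: "is_mdp P R \<gamma>"
    and leg: "legendre C h"
    and dom: "actdist \<subseteq> C" "rint_actdist \<subseteq> rel_interior C"
    and rho: "\<forall>s. 0 \<le> \<rho> s" "(\<Sum>s\<in>UNIV. \<rho> s) = 1"
    and opt: "\<pi>s \<in> policies" "\<forall>\<pi>'\<in>policies. \<forall>s. Vs P R \<gamma> \<pi>s s \<le> Vs P R \<gamma> \<pi>' s"
    and init: "\<pi> 0 \<in> rint_policies"
    and pmd: "\<forall>k. pmd_step P R \<gamma> h (\<eta> k) (\<pi> k) (\<pi> (Suc k))"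
    and theta: "\<theta> = ratio_inf (drho P \<gamma> \<rho> \<pi>s) \<rho> / ereal (1 - \<gamma>)"
    and eta0: "\<eta> 0 > 0"
    and eta: "\<forall>k. ereal (\<eta> (Suc k)) \<ge> \<theta> / (\<theta> - 1) * ereal (\<eta> k)"
  shows "\<forall>k. ereal (Vrho P R \<gamma> \<rho> (\<pi> k) - Vstar P R \<gamma> \<rho>) \<le>
           (1 - 1 / \<theta>) ^ k *
           ereal (Vrho P R \<gamma> \<rho> (\<pi> 0) - Vstar P R \<gamma> \<rho> + Dstar P \<gamma> \<rho> h \<pi>s (\<pi> 0) / (\<eta> 0 * \<gamma>))"
proof -
  have g0: "0 < \<gamma>" and g1: "\<gamma> < 1" using gam[OF mdp] by auto
  have intne: "interior C \<noteq> {}" using leg unfolding legendre_def by auto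
  have ri: "rel_interior C = interior C" using rel_interior_nonempty_interior[OF intne] .
  have pm: "\<And>k s. is_arg_min (\<lambda>p. \<eta> k * (Qsa P R \<gamma> (\<pi> k) s \<bullet> p) + bregman h p (\<pi> k s)) (\<lambda>p. p \<in> actdist) (\<pi> (Suc k) s)"
    using pmd unfolding pmd_step_def by blast
  have inv: "\<pi> k \<in> policies \<and> (\<forall>s. \<pi> k s \<in> interior C)" for k
  proof (induction k)
    case 0
    have r0: "\<forall>s. \<pi> 0 s \<in> rint_actdist" using init unfolding rint_policies_def by auto
    hence "\<forall>s. \<pi> 0 s \<in> actdist" unfolding rint_actdist_def actdist_def by (auto simp: less_imp_le)
    moreover have "\<forall>s. \<pi> 0 s \<in> interior C" using r0 dom(2) ri by auto
    ultimately show ?case unfolding policies_def by auto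
  next
    case (Suc k)
    have A: "\<pi> (Suc k) s \<in> actdist" for s using pm[of k s] unfolding is_arg_min_def by auto
    have I: "\<pi> (Suc k) s \<in> interior C" for s
      using argmin_interior[OF leg dom(1) _ _ pm[of k s]] Suc unfolding policies_def by auto
    show ?case using A I unfolding policies_def by auto
  qed
  hence pol: "\<And>k. \<pi> k \<in> policies" and pint: "\<And>k s. \<pi> k s \<in> interior C" by auto
  have piA: "\<And>k s. \<pi> k s \<in> actdist" using pol unfolding policies_def by auto
  have psA: "\<And>s. \<pi>s s \<in> actdist" using opt(1) unfolding policies_def by auto
  have Veq: "Vstar P R \<gamma> \<rho> = Vrho P R \<gamma> \<rho> \<pi>s" by (rule Vstar_eq[OF opt rho(1)])
  define d where "d = drho P \<gamma> \<rho> \<pi>s"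
  have dnn: "\<And>s. 0 \<le> d s" unfolding d_def by (rule drho_nonneg[OF mdp opt(1) rho(1)])
  define Dk where "Dk = (\<lambda>k. Dstar P \<gamma> \<rho> h \<pi>s (\<pi> k))"
  have Dk_eq: "Dk k = (\<Sum>s\<in>UNIV. d s * bregman h (\<pi>s s) (\<pi> k s))" for k
    unfolding Dk_def Dstar_def d_def ..
  have Dnn: "Dk k \<ge> 0" for k
    unfolding Dk_eq using dnn bregman_nonneg[OF leg _ pint] psA dom(1)
    by (intro sum_nonneg mult_nonneg_nonneg) (auto simp: subset_iff)
  define V where "V = (\<lambda>k. Vrho P R \<gamma> \<rho> (\<pi> k))"
  define Vs' where "Vs' = Vrho P R \<gamma> \<rho> \<pi>s"
  define a where "a = (\<lambda>k s. (\<pi> (Suc k) s - \<pi> k s) \<bullet> Qsa P R \<gamma> (\<pi> k) s)"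
  have desc: "a k s \<le> 0" if "\<eta> k \<ge> 0" for k s
  proof -
    have "Qsa P R \<gamma> (\<pi> k) s \<bullet> \<pi> (Suc k) s \<le> Qsa P R \<gamma> (\<pi> k) s \<bullet> \<pi> k s"
      by (rule pmd_descent[OF leg dom(1) piA pint pm that])
    moreover have "a k s = Qsa P R \<gamma> (\<pi> k) s \<bullet> \<pi> (Suc k) s - Qsa P R \<gamma> (\<pi> k) s \<bullet> \<pi> k s"
      unfolding a_def inner_diff_left by (simp only: inner_commute)
    ultimately show ?thesis by simp
  qed
  have PD2: "(1 - \<gamma>) * (V (Suc k) - V k) = (\<Sum>s\<in>UNIV. drho P \<gamma> \<rho> (\<pi> (Suc k)) s * a k s)" for k
    unfolding V_def a_def by (rule perf_diff_rho[OF mdp pol pol])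
  have mono: "V (Suc k) \<le> V k" if "\<eta> k \<ge> 0" for k
  proof -
    have "(\<Sum>s\<in>UNIV. drho P \<gamma> \<rho> (\<pi> (Suc k)) s * a k s) \<le> 0"
      using desc[OF that] drho_nonneg[OF mdp pol rho(1)]
      by (intro sum_nonpos mult_nonneg_nonpos) auto
    hence "(1 - \<gamma>) * (V (Suc k) - V k) \<le> 0" using PD2 by simp
    thus ?thesis using g1 by (simp add: mult_le_0_iff)
  qed
  have D0nn: "0 \<le> Dstar P \<gamma> \<rho> h \<pi>s (\<pi> 0) / (\<eta> 0 * \<gamma>)"
    using Dnn[of 0] eta0 g0 unfolding Dk_def by simp
  have ratio_eq: "ratio_inf d \<rho> = Max ((\<lambda>s. if \<rho> s = 0 then (if d s = 0 then 1 else \<infinity>) else ereal (d s / \<rho> s)) ` UNIV)"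
    unfolding ratio_inf_def ..
  show ?thesis
  proof (cases "\<exists>s. \<rho> s = 0 \<and> d s \<noteq> 0")
    case True
    then obtain s0 where s0: "\<rho> s0 = 0" "d s0 \<noteq> 0" by blast
    have "\<infinity> \<le> ratio_inf d \<rho>" unfolding ratio_eq
      by (rule Max_ge_iff[THEN iffD2]) (use s0 in \<open>auto intro!: bexI[of _ s0]\<close>)
    hence rinf: "ratio_inf d \<rho> = \<infinity>" by (simp add: top_unique)
    have thinf: "\<theta> = \<infinity>" using theta rinf g1 unfolding d_def by simp
    have etann: "\<eta> k \<ge> 0" for k
    proof (cases k)
      case 0 thus ?thesis using eta0 by simp
    next
      case (Suc j)
      have "\<theta> / (\<theta> - 1) = 0" unfolding thinf by (simp add: divide_ereal_def)
      hence "ereal (\<eta> (Suc j)) \<ge> 0" using eta[rule_format, of j] by simp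
      thus ?thesis using Suc by simp
    qed
    have Vmono: "V k \<le> V 0" for k
    proof (induction k)
      case 0 thus ?case by simp
    next
      case (Suc k) thus ?case using mono[OF etann[of k]] by simp
    qed
    show ?thesis
    proof
      fix k
      have "(1 - 1 / \<theta>) ^ k = 1" unfolding thinf by simp
      moreover have "Vrho P R \<gamma> \<rho> (\<pi> k) - Vstar P R \<gamma> \<rho> \<le>
          Vrho P R \<gamma> \<rho> (\<pi> 0) - Vstar P R \<gamma> \<rho> + Dstar P \<gamma> \<rho> h \<pi>s (\<pi> 0) / (\<eta> 0 * \<gamma>)"
        using Vmono[of k] D0nn unfolding V_def by simp
      ultimately show "ereal (Vrho P R \<gamma> \<rho> (\<pi> k) - Vstar P R \<gamma> \<rho>) \<le>
           (1 - 1 / \<theta>) ^ k *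
           ereal (Vrho P R \<gamma> \<rho> (\<pi> 0) - Vstar P R \<gamma> \<rho> + Dstar P \<gamma> \<rho> h \<pi>s (\<pi> 0) / (\<eta> 0 * \<gamma>))"
        by simp
    qed
  next
    case False
    hence nz: "\<And>s. \<rho> s = 0 \<Longrightarrow> d s = 0" by blast
    define f where "f = (\<lambda>s. if \<rho> s = 0 then 1 else d s / \<rho> s)"
    define r where "r = Max (range f)"
    have "ratio_inf d \<rho> = Max ((\<lambda>s. ereal (f s)) ` UNIV)" unfolding ratio_eq
      by (rule arg_cong[where f = Max], rule image_cong) (auto simp: f_def nz)
    also have "\<dots> = ereal r" unfolding r_def
      by (subst mono_Max_commute[of ereal]) (auto simp: mono_def image_image)
    finally have rfin: "ratio_inf d \<rho> = ereal r" .
    have dle: "d s \<le> r * \<rho> s" for s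
    proof (cases "\<rho> s = 0")
      case True thus ?thesis using nz by simp
    next
      case False
      hence pos: "\<rho> s > 0" using rho(1) by (simp add: less_le)
      have "f s \<le> r" unfolding r_def by simp
      hence "d s / \<rho> s \<le> r" using False unfolding f_def by simp
      thus ?thesis using pos by (simp add: divide_le_eq)
    qed
    have dsum: "(\<Sum>s\<in>UNIV. d s) = 1" unfolding d_def by (rule drho_sum[OF mdp opt(1) rho(2)])
    have r1: "r \<ge> 1"
    proof -
      have "(\<Sum>s\<in>UNIV. d s) \<le> (\<Sum>s\<in>UNIV. r * \<rho> s)" by (rule sum_mono) (rule dle)
      thus ?thesis using dsum rho(2) by (simp add: sum_distrib_left[symmetric])
    qed
    define \<theta>t where "\<theta>t = r / (1 - \<gamma>)"
    have thc: "\<theta>t * (1 - \<gamma>) = r" unfolding \<theta>t_def using g1 by simp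
    have th1: "\<theta>t > 1"
    proof -
      have "1 < 1 / (1 - \<gamma>)" using g0 g1 by simp
      also have "\<dots> \<le> \<theta>t" unfolding \<theta>t_def using r1 g1 by (intro divide_right_mono) auto
      finally show ?thesis .
    qed
    have thfin: "\<theta> = ereal \<theta>t" using theta rfin g1 unfolding d_def \<theta>t_def by simp
    have tq: "\<theta> / (\<theta> - 1) = ereal (\<theta>t / (\<theta>t - 1))"
    proof -
      have "ereal \<theta>t - 1 = ereal (\<theta>t - 1)" by (simp add: one_ereal_def)
      thus ?thesis unfolding thfin using th1 by simp
    qed
    have eta': "\<eta> (Suc k) \<ge> \<theta>t / (\<theta>t - 1) * \<eta> k" for k
      using eta[rule_format, of k] unfolding tq by simp
    have etapos: "\<eta> k > 0" for k
    proof (induction k)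
      case 0 thus ?case using eta0 .
    next
      case (Suc k)
      have "0 < \<theta>t / (\<theta>t - 1) * \<eta> k" using Suc th1 by simp
      thus ?case using eta'[of k] by linarith
    qed
    have eta2: "(\<theta>t - 1) * \<eta> (Suc k) \<ge> \<theta>t * \<eta> k" for k
    proof -
      have "(\<theta>t - 1) * (\<theta>t / (\<theta>t - 1) * \<eta> k) \<le> (\<theta>t - 1) * \<eta> (Suc k)"
        using eta'[of k] th1 by (intro mult_left_mono) auto
      thus ?thesis using th1 by simp
    qed
    define \<Delta> where "\<Delta> = (\<lambda>k. V k - Vs')"
    have step: "\<theta>t * \<Delta> (Suc k) \<le> (\<theta>t - 1) * \<Delta> k + (Dk k - Dk (Suc k)) / ((1 - \<gamma>) * \<eta> k)" for k
    proof -
      let ?Q = "Qsa P R \<gamma> (\<pi> k)"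
      define b where "b = (\<lambda>s. (\<pi>s s - \<pi> k s) \<bullet> ?Q s)"
      define B0 where "B0 = (\<lambda>s. bregman h (\<pi>s s) (\<pi> k s))"
      define B1 where "B1 = (\<lambda>s. bregman h (\<pi>s s) (\<pi> (Suc k) s))"
      have ek: "\<eta> k > 0" by (rule etapos)
      have ha: "a k s \<le> 0" for s using desc ek by (simp add: less_imp_le)
      have hb: "b s \<ge> a k s - (B0 s - B1 s) / \<eta> k" for s
      proof -
        have tp: "\<eta> k * (?Q s \<bullet> \<pi> (Suc k) s) + bregman h (\<pi> (Suc k) s) (\<pi> k s)
            \<le> \<eta> k * (?Q s \<bullet> \<pi>s s) + B0 s - B1 s"
          unfolding B0_def B1_def by (rule three_point[OF leg dom(1) piA pint pm psA])
        have "0 \<le> bregman h (\<pi> (Suc k) s) (\<pi> k s)"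
          using bregman_nonneg[OF leg _ pint] piA dom(1) by blast
        hence "\<eta> k * (?Q s \<bullet> \<pi> (Suc k) s - ?Q s \<bullet> \<pi>s s) \<le> B0 s - B1 s"
          using tp by (simp add: algebra_simps)
        hence "?Q s \<bullet> \<pi> (Suc k) s - ?Q s \<bullet> \<pi>s s \<le> (B0 s - B1 s) / \<eta> k"
          using ek by (simp add: le_divide_eq mult.commute)
        moreover have "b s = ?Q s \<bullet> \<pi>s s - ?Q s \<bullet> \<pi> k s"
          unfolding b_def inner_diff_left by (simp only: inner_commute)
        moreover have "a k s = ?Q s \<bullet> \<pi> (Suc k) s - ?Q s \<bullet> \<pi> k s"
          unfolding a_def inner_diff_left by (simp only: inner_commute)
        ultimately show ?thesis by linarith
      qed
      have PD1: "(1 - \<gamma>) * (Vs' - V k) = (\<Sum>s\<in>UNIV. d s * b s)"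
        unfolding Vs'_def V_def d_def b_def by (rule perf_diff_rho[OF mdp pol opt(1)])
      have S1: "(\<Sum>s\<in>UNIV. drho P \<gamma> \<rho> (\<pi> (Suc k)) s * a k s) \<le> (\<Sum>s\<in>UNIV. (1 - \<gamma>) * (\<rho> s * a k s))"
      proof (rule sum_mono)
        fix s
        have "(1 - \<gamma>) * \<rho> s \<le> drho P \<gamma> \<rho> (\<pi> (Suc k)) s" by (rule drho_ge[OF mdp pol rho(1)])
        hence "drho P \<gamma> \<rho> (\<pi> (Suc k)) s * a k s \<le> ((1 - \<gamma>) * \<rho> s) * a k s"
          using ha[of s] by (rule mult_right_mono_neg)
        thus "drho P \<gamma> \<rho> (\<pi> (Suc k)) s * a k s \<le> (1 - \<gamma>) * (\<rho> s * a k s)" by (simp add: mult.assoc)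
      qed
      have "(1 - \<gamma>) * (V (Suc k) - V k) \<le> (1 - \<gamma>) * (\<Sum>s\<in>UNIV. \<rho> s * a k s)"
        using PD2[of k] S1 by (simp add: sum_distrib_left)
      hence V1: "V (Suc k) - V k \<le> (\<Sum>s\<in>UNIV. \<rho> s * a k s)" using g1 by simp
      have S2: "(\<Sum>s\<in>UNIV. d s * b s) \<ge> (\<Sum>s\<in>UNIV. d s * a k s) - (Dk k - Dk (Suc k)) / \<eta> k"
      proof -
        have "(\<Sum>s\<in>UNIV. d s * (a k s - (B0 s - B1 s) / \<eta> k)) \<le> (\<Sum>s\<in>UNIV. d s * b s)"
          using hb dnn by (intro sum_mono mult_left_mono) auto
        moreover have "(\<Sum>s\<in>UNIV. d s * (a k s - (B0 s - B1 s) / \<eta> k)) =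
            (\<Sum>s\<in>UNIV. d s * a k s) - ((\<Sum>s\<in>UNIV. d s * B0 s) - (\<Sum>s\<in>UNIV. d s * B1 s)) / \<eta> k"
        proof -
          have "\<And>s. d s * (a k s - (B0 s - B1 s) / \<eta> k) = d s * a k s - (d s * B0 s / \<eta> k - d s * B1 s / \<eta> k)"
            by (simp add: algebra_simps diff_divide_distrib)
          hence "(\<Sum>s\<in>UNIV. d s * (a k s - (B0 s - B1 s) / \<eta> k)) =
              (\<Sum>s\<in>UNIV. d s * a k s) - ((\<Sum>s\<in>UNIV. d s * B0 s / \<eta> k) - (\<Sum>s\<in>UNIV. d s * B1 s / \<eta> k))"
            by (simp only: sum_subtractf)
          thus ?thesis by (simp only: sum_divide_distrib[symmetric] diff_divide_distrib)
        qed
        moreover have "Dk k = (\<Sum>s\<in>UNIV. d s * B0 s)" "Dk (Suc k) = (\<Sum>s\<in>UNIV. d s * B1 s)"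
          unfolding Dk_eq B0_def B1_def by simp_all
        ultimately show ?thesis by simp
      qed
      have S3: "(\<Sum>s\<in>UNIV. d s * a k s) \<ge> r * (\<Sum>s\<in>UNIV. \<rho> s * a k s)"
      proof -
        have "(\<Sum>s\<in>UNIV. (r * \<rho> s) * a k s) \<le> (\<Sum>s\<in>UNIV. d s * a k s)"
          using dle ha by (intro sum_mono mult_right_mono_neg) auto
        thus ?thesis by (simp add: sum_distrib_left mult.assoc)
      qed
      have S4: "r * (\<Sum>s\<in>UNIV. \<rho> s * a k s) \<ge> r * (V (Suc k) - V k)"
        using V1 r1 by (intro mult_left_mono) auto
      define X where "X = Dk k - Dk (Suc k)"
      have c1: "(1 - \<gamma>) * (Vs' - V k) \<ge> r * (V (Suc k) - V k) - X / \<eta> k"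
        using PD1 S2 S3 S4 unfolding X_def by linarith
      have "(1 - \<gamma>) * (\<theta>t * (V (Suc k) - V k) - X / ((1 - \<gamma>) * \<eta> k)) = r * (V (Suc k) - V k) - X / \<eta> k"
        unfolding thc[symmetric] using g1 ek by (simp add: field_simps)
      hence "(1 - \<gamma>) * (\<theta>t * (V (Suc k) - V k) - X / ((1 - \<gamma>) * \<eta> k)) \<le> (1 - \<gamma>) * (Vs' - V k)"
        using c1 by simp
      hence c2: "\<theta>t * (V (Suc k) - V k) - X / ((1 - \<gamma>) * \<eta> k) \<le> Vs' - V k"
        using g1 by simp
      have "\<theta>t * \<Delta> (Suc k) = \<theta>t * (V (Suc k) - V k) + \<theta>t * \<Delta> k" unfolding \<Delta>_def by (simp add: algebra_simps)
      also have "\<dots> \<le> (Vs' - V k) + X / ((1 - \<gamma>) * \<eta> k) + \<theta>t * \<Delta> k" using c2 by linarith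
      also have "\<dots> = (\<theta>t - 1) * \<Delta> k + X / ((1 - \<gamma>) * \<eta> k)" unfolding \<Delta>_def by (simp add: algebra_simps)
      finally show ?thesis unfolding X_def .
    qed
    have main: "\<Delta> k \<le> (1 - 1/\<theta>t)^k * (\<Delta> 0 + Dk 0 / (\<eta> 0 * (1 - (1 - \<gamma>))))" for k
      by (rule recur[where c = "1 - \<gamma>"]) (use g0 g1 thc r1 etapos eta2 Dnn step in auto)
    show ?thesis
    proof
      fix k
      have "1 - 1 / \<theta> = ereal (1 - 1/\<theta>t)" unfolding thfin one_ereal_def using th1
        by (simp add: ereal_divide)
      hence "(1 - 1 / \<theta>) ^ k = ereal ((1 - 1/\<theta>t) ^ k)" by (simp add: ereal_power)
      moreover have "Vrho P R \<gamma> \<rho> (\<pi> k) - Vstar P R \<gamma> \<rho> \<le> (1 - 1/\<theta>t) ^ k *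
          (Vrho P R \<gamma> \<rho> (\<pi> 0) - Vstar P R \<gamma> \<rho> + Dstar P \<gamma> \<rho> h \<pi>s (\<pi> 0) / (\<eta> 0 * \<gamma>))"
        using main[of k] unfolding \<Delta>_def V_def Vs'_def Veq Dk_def by simp
      ultimately show "ereal (Vrho P R \<gamma> \<rho> (\<pi> k) - Vstar P R \<gamma> \<rho>) \<le>
           (1 - 1 / \<theta>) ^ k *
           ereal (Vrho P R \<gamma> \<rho> (\<pi> 0) - Vstar P R \<gamma> \<rho> + Dstar P \<gamma> \<rho> h \<pi>s (\<pi> 0) / (\<eta> 0 * \<gamma>))"
        by simp
    qed
  qed
qed

end
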